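(* Let $\mathcal{M}$ be a separable metric space, $f:\mathcal{M}\to\mathcal{M}$ continuous, and $\mathcal{X}\subseteq\mathcal{M}$ forward invariant under $f$. For any $\xi\in\mathcal{X}$, if the trajectory through $\xi$ is forward precompact in $\mathcal{X}$, then $\omega_{\mathcal{X}}(\xi)$ is nonempty. Moreover, if $\mathcal{M}=\mathbb{R}^n$, $f(x)=Ax$ on $\mathcal{X}$ for some $A\in\mathbb{R}^{n\times n}$, and $\mathcal{X}$ is closed in $\mathbb{R}^n$, then conversely, $\omega_{\mathcal{X}}(\xi)\neq\emptyset$ implies that the trajectory through $\xi$ is forward precompact in $\mathcal{X}$.
   Context: The forward orbit of $\xi$ is $\{f^k(\xi)\mid k\in\mathbb{N}\}$; the trajectory through $\xi$ is forward precompact in $\mathcal{X}$ if the closure of its forward orbit in $\mathcal{X}$ is compact. $\omega_{\mathcal{X}}(\xi)$ is the set of $x\in\mathcal{X}$ such that $f^{k_j}(\xi)\to x$ for some sequence of indices $k_j\to\infty$. *)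

theory Defs
  imports "HOL-Analysis.Analysis"
begin

definition forward_orbit :: "('a \<Rightarrow> 'a) \<Rightarrow> 'a \<Rightarrow> 'a set" where
  "forward_orbit f \<xi> = {(f ^^ k) \<xi> | k. True}"

text \<open>The trajectory through xi is forward precompact in X: the closure of the
  forward orbit in (the subspace) X is compact. The closure relative to X is
  X intersected with the closure in the ambient space.\<close>
definition forward_precompact_in :: "'a::topological_space set \<Rightarrow> ('a \<Rightarrow> 'a) \<Rightarrow> 'a \<Rightarrow> bool" where
  "forward_precompact_in X f \<xi> \<longleftrightarrow> compact (X \<inter> closure (forward_orbit f \<xi>))"

definition omega_limit_in :: "'a::topological_space set \<Rightarrow> ('a \<Rightarrow> 'a) \<Rightarrow> 'a \<Rightarrow> 'a set" where
  "omega_limit_in X f \<xi> = {x \<in> X. \<exists>r::nat \<Rightarrow> nat. strict_mono r \<and> (\<lambda>j. (f ^^ r j) \<xi>) \<longlonglongrightarrow> x}"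

end

theory Submission
  imports Defs "HOL-Computational_Algebra.Fundamental_Theorem_Algebra"
begin


type_synonym 'n cm = "complex^'n^'n"

definition pT :: "complex^'n^'n \<Rightarrow> complex poly \<Rightarrow> complex^'n \<Rightarrow> complex^'n" where
  "pT C p x = (\<Sum>i\<le>degree p. coeff p i *s (((*v) C) ^^ i) x)"

lemma norm_smult_vec: "norm ((c::complex) *s (x::complex^'n)) = norm c * norm x"
  unfolding norm_vec_def by (simp add: norm_mult L2_set_right_distrib)

lemma Tpow_add: fixes C :: "('n::finite) cm" shows "(((*v) C) ^^ k) (x + y) = (((*v) C) ^^ k) x + (((*v) C) ^^ k) y"
  by (induction k) (simp_all add: matrix_vector_right_distrib)

lemma Tpow_scale: fixes C :: "('n::finite) cm" shows "(((*v) C) ^^ k) (c *s x) = c *s (((*v) C) ^^ k) x"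
  by (induction k) (simp_all add: vec.scale)

lemma Tpow_zero: fixes C :: "('n::finite) cm" shows "(((*v) C) ^^ k) 0 = 0"
  by (induction k) (simp_all add: vec.zero)

lemma Tpow_sum: fixes C :: "('n::finite) cm" shows "(((*v) C) ^^ k) (\<Sum>i\<in>A. g i) = (\<Sum>i\<in>A. (((*v) C) ^^ k) (g i))"
  by (induction A rule: infinite_finite_induct) (auto simp: Tpow_add Tpow_zero)

lemma pT_gen: "degree p \<le> n \<Longrightarrow> pT C p x = (\<Sum>i\<le>n. coeff p i *s (((*v) C) ^^ i) x)"
  unfolding pT_def
  by (rule sum.mono_neutral_left) (auto simp: coeff_eq_0)

lemma pT_add: "pT C (p + q) x = pT C p x + pT C q x"
proof -
  let ?n = "max (degree p) (degree q)"
  have "degree (p+q) \<le> ?n" by (rule degree_add_le) auto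
  then show ?thesis
    by (simp add: pT_gen[of _ ?n] vector_sadd_rdistrib sum.distrib)
qed

lemma pT_smult: "pT C (smult a p) x = a *s pT C p x"
  by (simp add: pT_gen[of _ "degree p"] vector_add_ldistrib vector_smult_assoc
      sum_distrib_left vec.scale_sum_right)

lemma pT_pCons: "pT C (pCons a p) x = a *s x + C *v (pT C p x)"
proof -
  have "pT C (pCons a p) x = (\<Sum>i\<le>Suc (degree p). coeff (pCons a p) i *s (((*v) C) ^^ i) x)"
    by (rule pT_gen) (simp add: degree_pCons_le)
  also have "\<dots> = a *s x + (\<Sum>i\<le>degree p. coeff p i *s (((*v) C) ^^ Suc i) x)"
    by (subst sum.atMost_Suc_shift) simp
  also have "(\<Sum>i\<le>degree p. coeff p i *s (((*v) C) ^^ Suc i) x) = C *v (pT C p x)"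
    unfolding pT_def by (simp add: vec.sum vec.scale)
  finally show ?thesis .
qed

lemma pT_0[simp]: "pT C 0 x = 0"
  by (simp add: pT_def)

lemma pT_mult: "pT C (p * q) x = pT C p (pT C q x)"
proof (induction p)
  case 0 then show ?case by simp
next
  case (pCons a p)
  then show ?case by (simp add: pT_add pT_smult pT_pCons)
qed

lemma pT_monom: "pT C (monom 1 k) x = (((*v) C) ^^ k) x"
  by (induction k) (simp_all add: monom_Suc pT_pCons one_pCons)

lemma pT_const[simp]: "pT C [:c:] x = c *s x"
  by (simp add: pT_pCons)

lemma pT_lin: "pT C [:-l, 1:] x = C *v x - l *s x"
  by (simp add: pT_pCons vector_smult_lneg)

lemma pT_commute: "pT C s ((((*v) C) ^^ k) x) = (((*v) C) ^^ k) (pT C s x)"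
  by (metis pT_monom pT_mult mult.commute)

lemma pT_vadd: "pT C p (x + y) = pT C p x + pT C p y"
  by (simp add: pT_def Tpow_add vector_add_ldistrib sum.distrib)

lemma pT_vscale: "pT C p (c *s x) = c *s pT C p x"
  by (simp add: pT_def Tpow_scale vector_smult_assoc vec.scale_sum_right mult.commute)

lemma pT_vdiff: "pT C p (x - y) = pT C p x - pT C p y"
  by (metis add_diff_cancel diff_add_cancel pT_vadd)

lemma T_bound: fixes C :: "('n::finite) cm"
  shows "\<exists>K\<ge>0. \<forall>x. norm (C *v x) \<le> K * norm x"
proof (intro exI[of _ "\<Sum>i\<in>UNIV. \<Sum>j\<in>UNIV. norm (C$i$j)"] conjI allI)
  show "0 \<le> (\<Sum>i\<in>UNIV. \<Sum>j\<in>UNIV. norm (C$i$j))" by (simp add: sum_nonneg)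
  fix x :: "complex^'n"
  have "norm (C *v x) \<le> (\<Sum>i\<in>UNIV. norm ((C *v x)$i))"
    unfolding norm_vec_def by (rule L2_set_le_sum) simp
  also have "\<dots> \<le> (\<Sum>i\<in>UNIV. (\<Sum>j\<in>UNIV. norm (C$i$j)) * norm x)"
  proof (rule sum_mono)
    fix i
    have "norm ((C *v x)$i) = norm (\<Sum>j\<in>UNIV. C$i$j * x$j)"
      by (simp add: matrix_vector_mult_def)
    also have "\<dots> \<le> (\<Sum>j\<in>UNIV. norm (C$i$j * x$j))" by (rule norm_sum)
    also have "\<dots> \<le> (\<Sum>j\<in>UNIV. norm (C$i$j) * norm x)"
      by (rule sum_mono) (simp add: norm_mult mult_left_mono Finite_Cartesian_Product.norm_nth_le)
    finally show "norm ((C *v x)$i) \<le> (\<Sum>j\<in>UNIV. norm (C$i$j)) * norm x"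
      by (simp add: sum_distrib_right)
  qed
  finally show "norm (C *v x) \<le> (\<Sum>i\<in>UNIV. \<Sum>j\<in>UNIV. norm (C$i$j)) * norm x"
    by (simp add: sum_distrib_right)
qed

lemma Tpow_bound: fixes C :: "('n::finite) cm"
  assumes "K \<ge> 0" "\<forall>x. norm (C *v x) \<le> K * norm x"
  shows "norm ((((*v) C) ^^ k) x) \<le> K^k * norm x"
proof (induction k)
  case 0 then show ?case by simp
next
  case (Suc k)
  have "norm ((((*v) C) ^^ Suc k) x) \<le> K * norm ((((*v) C) ^^ k) x)" using assms(2) by simp
  also have "\<dots> \<le> K * (K^k * norm x)" using Suc assms(1) by (rule mult_left_mono)
  finally show ?case by simp
qed

lemma pT_bound: fixes C :: "('n::finite) cm"
  shows "\<exists>K\<ge>0. \<forall>x. norm (pT C s x) \<le> K * norm x"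
proof -
  obtain K where K: "K \<ge> 0" "\<forall>x. norm (C *v x) \<le> K * norm x" using T_bound by blast
  show ?thesis
  proof (intro exI[of _ "\<Sum>i\<le>degree s. norm (coeff s i) * K^i"] conjI allI)
    show "0 \<le> (\<Sum>i\<le>degree s. norm (coeff s i) * K^i)" using K by (simp add: sum_nonneg)
    fix x
    have "norm (pT C s x) \<le> (\<Sum>i\<le>degree s. norm (coeff s i *s (((*v) C) ^^ i) x))"
      unfolding pT_def by (rule norm_sum)
    also have "\<dots> \<le> (\<Sum>i\<le>degree s. norm (coeff s i) * K^i * norm x)"
      by (rule sum_mono) (simp add: norm_smult_vec mult.assoc mult_left_mono Tpow_bound[OF K])
    finally show "norm (pT C s x) \<le> (\<Sum>i\<le>degree s. norm (coeff s i) * K^i) * norm x"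
      by (simp add: sum_distrib_right)
  qed
qed



lemma Tpow_eig: fixes C :: "('n::finite) cm"
  assumes "C *v w = l *s w" shows "(((*v) C) ^^ k) w = l^k *s w"
  by (induction k) (simp_all add: vec.scale assms vector_smult_assoc mult.commute)

lemma Tpow_jord: fixes C :: "('n::finite) cm"
  assumes "C *v w = l *s w" "C *v z = l *s z + w"
  shows "l *s (((*v) C) ^^ k) z = l^(Suc k) *s z + (of_nat k * l^k) *s w"
proof (induction k)
  case 0 then show ?case by simp
next
  case (Suc k)
  have "l *s (((*v) C) ^^ Suc k) z = C *v (l *s (((*v) C) ^^ k) z)"
    by (simp add: vec.scale)
  also have "\<dots> = C *v (l^(Suc k) *s z + (of_nat k * l^k) *s w)" using Suc by simp
  also have "\<dots> = l^(Suc k) *s (l *s z + w) + (of_nat k * l^k) *s (l *s w)"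
    by (simp add: matrix_vector_right_distrib vec.scale assms)
  also have "\<dots> = l^(Suc (Suc k)) *s z + (of_nat (Suc k) * l^(Suc k)) *s w"
    by (simp add: vector_add_ldistrib vector_smult_assoc vector_sadd_rdistrib algebra_simps)
  finally show ?case .
qed

lemma main_bounded: fixes C :: "('n::finite) cm" and r :: "nat \<Rightarrow> nat"
  shows "p \<noteq> 0 \<Longrightarrow> pT C p v = 0 \<Longrightarrow> strict_mono r \<Longrightarrow>
    (\<forall>j. norm ((((*v) C)^^(r j)) v) \<le> B) \<Longrightarrow> \<exists>M. \<forall>k. norm ((((*v) C)^^k) v) \<le> M"
proof (induction "degree p" arbitrary: p v B rule: less_induct)
  case less
  note IH = less.hyps
  have rj: "j \<le> r j" for j using less.prems(3) by (rule strict_mono_imp_increasing)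
  show ?case
  proof (cases "degree p = 0")
    case True
    then obtain c where c: "p = [:c:]" by (metis degree_eq_zeroE)
    with less.prems have "c \<noteq> 0" "c *s v = 0" by auto
    then have "v = 0" by simp
    then show ?thesis by (auto simp: Tpow_zero)
  next
    case False
    then have "\<not> constant (poly p)" by (simp add: constant_degree)
    then obtain l where "poly p l = 0" using fundamental_theorem_of_algebra by blast
    then have "[:-l,1:] dvd p" by (simp add: poly_eq_0_iff_dvd)
    then obtain q where pq: "p = [:-l,1:] * q" by (elim dvdE)
    have q0: "q \<noteq> 0" using pq less.prems(1) by auto
    have "degree ([:-l,1:] * q) = 1 + degree q" using q0 by (subst degree_mult_eq) auto
    then have degq: "degree q < degree p" using pq by simp
    define u where "u = pT C [:-l,1:] v"
    have qu: "pT C q u = 0" unfolding u_def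
      using less.prems(2) by (metis pT_mult pq mult.commute)
    obtain KL where KL: "KL \<ge> 0" "\<forall>x. norm (pT C [:-l,1:] x) \<le> KL * norm x"
      using pT_bound by blast
    have "norm ((((*v) C)^^(r j)) u) \<le> KL * B" for j
    proof -
      have "norm ((((*v) C)^^(r j)) u) = norm (pT C [:-l,1:] ((((*v) C)^^(r j)) v))"
        unfolding u_def pT_commute ..
      also have "\<dots> \<le> KL * norm ((((*v) C)^^(r j)) v)" using KL by blast
      also have "\<dots> \<le> KL * B" using less.prems(4) KL(1) by (simp add: mult_left_mono)
      finally show ?thesis .
    qed
    then obtain M where M: "\<forall>k. norm ((((*v) C)^^k) u) \<le> M"
      using IH[OF degq q0 qu less.prems(3)] by blast
    have M0: "M \<ge> 0" using M norm_ge_zero order_trans by blast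
    define a where "a k = (((*v) C)^^k) v" for k
    define b where "b k = (((*v) C)^^k) u" for k
    have rec: "a (Suc k) = l *s a k + b k" for k
    proof -
      have "b k = pT C [:-l,1:] (a k)" unfolding a_def b_def u_def
        by (simp only: pT_commute)
      then have "b k = C *v a k - l *s a k" by (simp only: pT_lin)
      then show ?thesis unfolding a_def by simp
    qed
    have bM: "norm (b k) \<le> M" for k using M b_def by simp
    consider "norm l < 1" | "norm l > 1" | "norm l = 1" by linarith
    then show ?thesis
    proof cases
      case 1
      define D where "D = max (norm v) (M / (1 - norm l))"
      have "norm (a k) \<le> D" for k
      proof (induction k)
        case 0 then show ?case by (simp add: a_def D_def)
      next
        case (Suc k)
        have "norm (a (Suc k)) \<le> norm l * norm (a k) + M"
          using rec[of k] bM[of k] norm_triangle_ineq[of "l *s a k" "b k"]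
          by (simp add: norm_smult_vec)
        also have "\<dots> \<le> norm l * D + M" using Suc by (simp add: mult_left_mono)
        also have "\<dots> \<le> D"
        proof -
          have "M / (1 - norm l) \<le> D" by (simp add: D_def)
          then have "M \<le> (1 - norm l) * D" using 1 by (simp add: field_simps)
          then show ?thesis by (simp add: algebra_simps)
        qed
        finally show ?case .
      qed
      then show ?thesis unfolding a_def by blast
    next
      case 2
      define D where "D = max B (M / (norm l - 1))"
      have bstep: "norm (a k) \<le> D" if "norm (a (Suc k)) \<le> D" for k
      proof -
        have "norm l * norm (a k) = norm (a (Suc k) - b k)"
          using rec[of k] by (simp add: norm_smult_vec)
        also have "\<dots> \<le> D + M" using that bM[of k] norm_triangle_ineq4[of "a (Suc k)" "b k"] by simp
        also have "\<dots> \<le> norm l * D"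
        proof -
          have "M / (norm l - 1) \<le> D" by (simp add: D_def)
          then have "M \<le> (norm l - 1) * D" using 2 by (simp add: field_simps)
          then show ?thesis by (simp add: algebra_simps)
        qed
        finally show ?thesis using 2 by (metis mult_le_cancel_left_pos order.strict_trans zero_less_one)
      qed
      have down: "norm (a (m + d)) \<le> D \<Longrightarrow> norm (a m) \<le> D" for m d
      proof (induction d arbitrary: m)
        case 0 then show ?case by simp
      next
        case (Suc d)
        then have "norm (a (Suc m + d)) \<le> D" by simp
        then have "norm (a (Suc m)) \<le> D" using Suc.IH by blast
        then show ?case by (rule bstep)
      qed
      have "norm (a k) \<le> D" for k
      proof -
        have "norm (a (r k)) \<le> D" using less.prems(4) by (simp add: a_def D_def le_max_iff_disj)
        moreover have "r k = k + (r k - k)" using rj[of k] by simp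
        ultimately show ?thesis using down by metis
      qed
      then show ?thesis unfolding a_def by blast
    next
      case 3
      then have l0: "l \<noteq> 0" by auto
      show ?thesis
      proof (cases "poly q l = 0")
        case False
        define c where "c = poly q l"
        have "poly (q - [:c:]) l = 0" by (simp add: c_def)
        then have "[:-l,1:] dvd (q - [:c:])" using poly_eq_0_iff_dvd by blast
        then obtain s where qs: "q - [:c:] = [:-l,1:] * s" by (elim dvdE)
        then have qs': "q = [:-l,1:] * s + [:c:]" by (metis diff_add_cancel)
        have c0: "c \<noteq> 0" using False c_def by simp
        have e1: "pT C [:-l,1:] (pT C s u) + c *s u = 0"
          using qu unfolding qs' pT_add pT_mult by simp
        define y where "y = (- 1 / c) *s pT C s u"
        have yu: "pT C [:-l,1:] y = u"
        proof -
          have "pT C [:-l,1:] y = (- 1 / c) *s pT C [:-l,1:] (pT C s u)"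
            by (simp only: y_def pT_vscale)
          also have "\<dots> = (- 1 / c) *s (- (c *s u))" using e1
            by (metis add.commute add_eq_0_iff)
          also have "\<dots> = u" using c0 by (simp add: vector_smult_assoc vector_smult_rneg)
          finally show ?thesis .
        qed
        define w where "w = v - y"
        have "pT C [:-l,1:] w = 0" by (simp add: w_def pT_vdiff yu u_def)
        then have Cw: "C *v w = l *s w" by (simp add: pT_lin)
        obtain Ks where Ks: "Ks \<ge> 0" "\<forall>x. norm (pT C s x) \<le> Ks * norm x"
          using pT_bound by blast
        have "norm (a k) \<le> norm (-1/c) * (Ks * M) + norm w" for k
        proof -
          have "a k = (((*v) C)^^k) y + (((*v) C)^^k) w"
            unfolding a_def w_def by (simp flip: Tpow_add)
          also have "(((*v) C)^^k) w = l^k *s w" using Cw by (rule Tpow_eig)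
          also have "(((*v) C)^^k) y = (- 1 / c) *s pT C s (b k)"
            unfolding y_def b_def by (simp only: Tpow_scale pT_commute)
          finally have "norm (a k) \<le> norm ((- 1 / c) *s pT C s (b k)) + norm (l^k *s w)"
            by (metis norm_triangle_ineq)
          also have "norm (l^k *s w) = norm w" using 3 by (simp add: norm_smult_vec norm_power)
          also have "norm ((- 1 / c) *s pT C s (b k)) \<le> norm (-1/c) * (Ks * M)"
            unfolding norm_smult_vec
            by (rule mult_left_mono) (use Ks bM[of k] in \<open>auto intro: order_trans mult_left_mono\<close>)
          finally show ?thesis by simp
        qed
        then show ?thesis unfolding a_def by blast
      next
        case True
        then have "[:-l,1:] dvd q" by (simp add: poly_eq_0_iff_dvd)
        then obtain s where qs: "q = [:-l,1:] * s" by (elim dvdE)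
        define z where "z = pT C s v"
        define w where "w = pT C [:-l,1:] z"
        have wq: "w = pT C q v" unfolding w_def z_def qs pT_mult ..
        show ?thesis
        proof (cases "w = 0")
          case True
          then have "pT C q v = 0" using wq by simp
          then show ?thesis using IH[OF degq q0 _ less.prems(3) less.prems(4)] by blast
        next
          case False
          have "pT C [:-l,1:] w = 0" using less.prems(2) unfolding wq pq pT_mult .
          then have Cw: "C *v w = l *s w" by (simp add: pT_lin)
          have Cz: "C *v z = l *s z + w" by (simp add: w_def pT_lin)
          obtain Ks where Ks: "Ks \<ge> 0" "\<forall>x. norm (pT C s x) \<le> Ks * norm x"
            using pT_bound by blast
          have ge: "of_nat (r j) * norm w - norm z \<le> Ks * B" for j
          proof -
            have "of_nat (r j) * norm w - norm z \<le> norm (l *s (((*v) C) ^^ (r j)) z)"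
            proof -
              have "norm ((of_nat (r j) * l^(r j)) *s w) \<le> norm (l *s (((*v) C) ^^ (r j)) z) + norm (l^(Suc (r j)) *s z)"
                unfolding Tpow_jord[OF Cw Cz] by (metis add_diff_cancel_left' norm_triangle_ineq4 add.commute)
              then show ?thesis using 3 by (simp add: norm_smult_vec norm_mult norm_power)
            qed
            also have "\<dots> = norm ((((*v) C) ^^ (r j)) z)" using 3 by (simp add: norm_smult_vec)
            also have "\<dots> = norm (pT C s ((((*v) C) ^^ (r j)) v))" by (simp add: z_def pT_commute)
            also have "\<dots> \<le> Ks * norm ((((*v) C) ^^ (r j)) v)" using Ks by blast
            also have "\<dots> \<le> Ks * B" using Ks(1) less.prems(4) by (simp add: mult_left_mono)
            finally show ?thesis .
          qed
          have wpos: "norm w > 0" using False by simp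
          obtain j :: nat where j: "(Ks * B + norm z) / norm w < of_nat j"
            using reals_Archimedean2 by blast
          have "of_nat j * norm w \<le> of_nat (r j) * norm w"
            using rj[of j] wpos by (simp add: mult_right_mono)
          moreover have "Ks * B + norm z < of_nat j * norm w" using j wpos by (simp add: field_simps)
          ultimately show ?thesis using ge[of j] by linarith
        qed
      qed
    qed
  qed
qed



lemma pT_pdiff: "pT C (p - q) x = pT C p x - pT C q x"
  by (metis add_diff_cancel diff_add_cancel pT_add)

lemma pT_psum: "pT C (\<Sum>i\<in>I. g i) x = (\<Sum>i\<in>I. pT C (g i) x)"
  by (induction I rule: infinite_finite_induct) (auto simp: pT_add)

lemma pT_monom_gen: "pT C (monom a k) x = a *s (((*v) C) ^^ k) x"
proof -
  have "monom a k = smult a (monom 1 k)" by (simp add: smult_monom)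
  then show ?thesis by (simp only: pT_smult pT_monom)
qed

lemma annihilator: fixes C :: "('n::finite) cm"
  shows "\<exists>p. p \<noteq> 0 \<and> pT C p z = 0"
proof (cases "inj_on (\<lambda>i. (((*v) C) ^^ i) z) {..CARD('n)}")
  case False
  then obtain i j where ij: "i \<noteq> j" "(((*v) C) ^^ i) z = (((*v) C) ^^ j) z"
    unfolding inj_on_def by blast
  show ?thesis
  proof (intro exI conjI)
    show "monom (1::complex) j - monom 1 i \<noteq> 0"
    proof
      assume "monom (1::complex) j - monom 1 i = 0"
      then have "coeff (monom (1::complex) j - monom 1 i) j = 0" by simp
      then show False using ij(1) by (simp add: coeff_monom)
    qed
    show "pT C (monom 1 j - monom 1 i) z = 0"
      by (simp add: pT_pdiff pT_monom ij(2))
  qed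
next
  case True
  define S where "S = (\<lambda>i. (((*v) C) ^^ i) z) ` {..CARD('n)}"
  have cardS: "card S = Suc (CARD('n))" unfolding S_def using True by (simp add: card_image)
  have "vec.dim S \<le> CARD('n)"
    using vec.dim_subset_UNIV[of S] by (simp add: vec.dimension_def card_cart_basis)
  then have "vec.dependent S"
    by (intro vec.dependent_biggerset_general) (simp add: cardS)
  then obtain t u where tu: "finite t" "t \<subseteq> S" "(\<Sum>v\<in>t. u v *s v) = 0" "\<exists>v\<in>t. u v \<noteq> 0"
    unfolding vec.dependent_explicit by blast
  define I where "I = {i\<in>{..CARD('n)}. (((*v) C) ^^ i) z \<in> t}"
  define c where "c i = (if i \<in> I then u ((((*v) C) ^^ i) z) else 0)" for i
  define p where "p = (\<Sum>i\<le>CARD('n). monom (c i) i)"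
  have tI: "t = (\<lambda>i. (((*v) C) ^^ i) z) ` I" using tu(2) unfolding I_def S_def by auto
  have injI: "inj_on (\<lambda>i. (((*v) C) ^^ i) z) I"
    using True unfolding I_def by (rule inj_on_subset) auto
  have "pT C p z = (\<Sum>i\<le>CARD('n). c i *s (((*v) C) ^^ i) z)"
    by (simp add: p_def pT_psum pT_monom_gen)
  also have "\<dots> = (\<Sum>i\<in>I. u ((((*v) C) ^^ i) z) *s (((*v) C) ^^ i) z)"
    by (rule sum.mono_neutral_cong_right) (auto simp: I_def c_def)
  also have "\<dots> = (\<Sum>v\<in>t. u v *s v)"
    unfolding tI by (rule sum.reindex[OF injI, symmetric, unfolded o_def])
  also have "\<dots> = 0" by (rule tu(3))
  finally have pz: "pT C p z = 0" .
  obtain v0 where v0: "v0 \<in> t" "u v0 \<noteq> 0" using tu(4) by blast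
  then obtain i0 where i0: "i0 \<in> I" "v0 = (((*v) C) ^^ i0) z" using tI by auto
  have "coeff p i0 = c i0"
  proof -
    have "coeff p i0 = (\<Sum>i\<le>CARD('n). if i = i0 then c i else 0)"
      by (simp add: p_def coeff_sum coeff_monom eq_commute)
    also have "\<dots> = c i0" using i0 unfolding I_def by simp
    finally show ?thesis .
  qed
  then have "coeff p i0 \<noteq> 0" using i0 v0 by (simp add: c_def)
  then have "p \<noteq> 0" by auto
  with pz show ?thesis by blast
qed

definition cv :: "real^'n \<Rightarrow> complex^'n" where "cv x = (\<chi> i. complex_of_real (x$i))"
definition cm :: "real^'n^'n \<Rightarrow> complex^'n^'n" where "cm A = (\<chi> i j. complex_of_real (A$i$j))"

lemma cm_mult: "cm A *v cv x = cv (A *v x)"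
  by (simp add: cm_def cv_def vec_eq_iff matrix_vector_mult_def)

lemma cv_pow: "(((*v) (cm A)) ^^ k) (cv x) = cv ((((*v) A) ^^ k) x)"
  by (induction k) (simp_all add: cm_mult)

lemma norm_cv: "norm (cv x) = norm x"
  by (simp add: cv_def norm_vec_def)

lemma linear_orbit_bounded:
  fixes A :: "real^'n^'n" and r :: "nat \<Rightarrow> nat"
  assumes "strict_mono r" "\<forall>j. norm ((((*v) A)^^(r j)) \<xi>) \<le> B"
  shows "\<exists>M. \<forall>k. norm ((((*v) A)^^k) \<xi>) \<le> M"
proof -
  obtain p where p: "p \<noteq> 0" "pT (cm A) p (cv \<xi>) = 0" using annihilator by blast
  have "\<forall>j. norm ((((*v) (cm A))^^(r j)) (cv \<xi>)) \<le> B"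
    using assms(2) by (simp add: cv_pow norm_cv)
  then obtain M where "\<forall>k. norm ((((*v) (cm A))^^k) (cv \<xi>)) \<le> M"
    using main_bounded[OF p assms(1)] by blast
  then show ?thesis by (auto simp: cv_pow norm_cv)
qed



lemma orbit_in: "f ` X \<subseteq> X \<Longrightarrow> \<xi> \<in> X \<Longrightarrow> (f ^^ k) \<xi> \<in> X"
  by (induction k) auto

lemma orbit_lin: "f ` X \<subseteq> X \<Longrightarrow> \<xi> \<in> X \<Longrightarrow> (\<forall>x\<in>X. f x = A *v x) \<Longrightarrow>
   (f ^^ k) \<xi> = (((*v) A) ^^ k) \<xi>"
proof (induction k)
  case 0 then show ?case by simp
next
  case (Suc k)
  have "(f ^^ Suc k) \<xi> = f ((f ^^ k) \<xi>)" by simp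
  also have "\<dots> = A *v ((f ^^ k) \<xi>)" using Suc.prems orbit_in[of f X \<xi> k] by blast
  finally show ?case using Suc by simp
qed

theorem lemma7:
  shows "(\<forall>(f :: 'a::metric_space \<Rightarrow> 'a) X \<xi>.
           separable_space (euclidean :: 'a topology) \<and> continuous_on UNIV f \<and> f ` X \<subseteq> X \<and> \<xi> \<in> X
           \<and> forward_precompact_in X f \<xi> \<longrightarrow> omega_limit_in X f \<xi> \<noteq> {})
    \<and> (\<forall>(f :: real^'n \<Rightarrow> real^'n) (A :: real^'n^'n) X \<xi>.
           continuous_on UNIV f \<and> f ` X \<subseteq> X \<and> \<xi> \<in> X \<and> (\<forall>x\<in>X. f x = A *v x) \<and> closed X
           \<and> omega_limit_in X f \<xi> \<noteq> {} \<longrightarrow> forward_precompact_in X f \<xi>)"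
proof (intro conjI allI impI)
  fix f :: "'a::metric_space \<Rightarrow> 'a" and X \<xi>
  assume H: "separable_space (euclidean :: 'a topology) \<and> continuous_on UNIV f \<and> f ` X \<subseteq> X \<and> \<xi> \<in> X
           \<and> forward_precompact_in X f \<xi>"
  let ?K = "X \<inter> closure (forward_orbit f \<xi>)"
  have K: "compact ?K" using H by (simp add: forward_precompact_in_def)
  have mem: "(f ^^ n) \<xi> \<in> ?K" for n
    using H orbit_in[of f X \<xi> n] closure_subset[of "forward_orbit f \<xi>"]
    by (auto simp: forward_orbit_def)
  obtain l r where lr: "l \<in> ?K" "strict_mono r" "((\<lambda>n. (f ^^ n) \<xi>) \<circ> r) \<longlonglongrightarrow> l"
    using compact_imp_seq_compact[OF K] mem unfolding seq_compact_def by metis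
  then have "l \<in> omega_limit_in X f \<xi>"
    unfolding omega_limit_in_def by (auto simp: o_def)
  then show "omega_limit_in X f \<xi> \<noteq> {}" by blast
next
  fix f :: "real^'n \<Rightarrow> real^'n" and A :: "real^'n^'n" and X \<xi>
  assume H: "continuous_on UNIV f \<and> f ` X \<subseteq> X \<and> \<xi> \<in> X \<and> (\<forall>x\<in>X. f x = A *v x) \<and> closed X
           \<and> omega_limit_in X f \<xi> \<noteq> {}"
  then obtain x r where xr: "strict_mono r" "(\<lambda>j. (f ^^ r j) \<xi>) \<longlonglongrightarrow> x"
    unfolding omega_limit_in_def by blast
  have lin: "(f ^^ k) \<xi> = (((*v) A) ^^ k) \<xi>" for k using H orbit_lin by blast
  have "Bseq (\<lambda>j. (f ^^ r j) \<xi>)" using xr(2) by (rule convergent_imp_Bseq[OF convergentI])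
  then obtain B where "\<forall>j. norm ((f ^^ r j) \<xi>) \<le> B" unfolding Bseq_def by auto
  then have "\<forall>j. norm ((((*v) A) ^^ r j) \<xi>) \<le> B" by (simp add: lin)
  then obtain M where M: "\<forall>k. norm ((((*v) A) ^^ k) \<xi>) \<le> M"
    using linear_orbit_bounded[OF xr(1)] by blast
  have "forward_orbit f \<xi> \<subseteq> cball 0 M"
    using M by (auto simp: forward_orbit_def lin)
  then have "bounded (forward_orbit f \<xi>)" using bounded_cball bounded_subset by blast
  then have "bounded (closure (forward_orbit f \<xi>))" by (rule bounded_closure)
  then have "bounded (X \<inter> closure (forward_orbit f \<xi>))" by (rule bounded_Int[OF disjI2])
  moreover have "closed (X \<inter> closure (forward_orbit f \<xi>))" using H by auto
  ultimately show "forward_precompact_in X f \<xi>"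
    unfolding forward_precompact_in_def by (simp add: compact_eq_bounded_closed)
qed

end
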